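(* Let $\mathcal{B}$ be a set of $n\times n$ stochastic matrices. Suppose there exists a vector $\pi\in\mathbb{R}^n$ with all components positive such that $\pi^T\mathbf{e}=1$ and $\pi^TA=\pi^T$ for all $A\in\mathcal{B}$. Then there exists a nonzero, symmetric, nonnegative definite matrix $M\in\mathbb{R}^{n\times n}$ of rank $n-1$ such that $M\mathbf{e}=0$ and $x^TA^TMAx\le x^TMx$ for all $x\in\mathbb{R}^n$ and all $A\in\mathcal{B}$.
   Context: $\mathbf{e}\in\mathbb{R}^n$ denotes the vector with all components equal to $1$. A square matrix is stochastic if it is entrywise nonnegative and each of its rows sums to $1$. *)

theory Defs
  imports "HOL-Analysis.Analysis"
begin

definition stochastic :: "real^'n^'n \<Rightarrow> bool" where
  "stochastic A \<longleftrightarrow> (\<forall>i j. A $ i $ j \<ge> 0) \<and> (\<forall>i. (\<Sum>j\<in>UNIV. A $ i $ j) = 1)"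

definition ones :: "real^'n" where
  "ones = (\<chi> i. 1)"

end

theory Submission
  imports Defs
begin

lemma var_id:
  fixes a x :: "'n::finite \<Rightarrow> real"
  assumes "(\<Sum>j\<in>UNIV. a j) = 1"
  shows "(\<Sum>j\<in>UNIV. a j * (x j - (\<Sum>k\<in>UNIV. a k * x k))^2)
        = (\<Sum>j\<in>UNIV. a j * (x j)^2) - (\<Sum>k\<in>UNIV. a k * x k)^2"
proof -
  define c where "c = (\<Sum>k\<in>UNIV. a k * x k)"
  have "(\<Sum>j\<in>UNIV. a j * (x j - c)^2)
      = (\<Sum>j\<in>UNIV. a j * (x j)^2) - 2 * c * (\<Sum>j\<in>UNIV. a j * x j) + c^2 * (\<Sum>j\<in>UNIV. a j)"
    by (simp add: power2_eq_square algebra_simps sum.distrib sum_subtractf sum_distrib_left)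
  also have "\<dots> = (\<Sum>j\<in>UNIV. a j * (x j)^2) - c^2"
    using assms by (simp add: c_def power2_eq_square)
  finally show ?thesis unfolding c_def .
qed

theorem mainTheorem4:
  fixes \<B> :: "(real^'n^'n) set" and \<pi> :: "real^'n"
  assumes n2: "CARD('n) \<ge> 2"
    and stoch: "\<forall>A\<in>\<B>. stochastic A"
    and pos: "\<forall>i. \<pi> $ i > 0"
    and norm: "\<pi> \<bullet> ones = 1"
    and inv: "\<forall>A\<in>\<B>. \<pi> v* A = \<pi>"
  shows "\<exists>M :: real^'n^'n. M \<noteq> 0 \<and> transpose M = M
           \<and> (\<forall>x. x \<bullet> (M *v x) \<ge> 0)
           \<and> rank M = CARD('n) - 1
           \<and> M *v ones = 0
           \<and> (\<forall>x. \<forall>A\<in>\<B>. (A *v x) \<bullet> (M *v (A *v x)) \<le> x \<bullet> (M *v x))"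
proof -
  define M :: "real^'n^'n" where "M = (\<chi> i j. (if i = j then \<pi>$i else 0) - \<pi>$i * \<pi>$j)"
  have psum: "(\<Sum>i\<in>UNIV. \<pi>$i) = 1" using norm by (simp add: inner_vec_def ones_def)
  have Mv: "M *v x = (\<chi> i. \<pi>$i * x$i - \<pi>$i * (\<pi> \<bullet> x))" for x
  proof -
    have "(\<Sum>j\<in>UNIV. ((if i = j then \<pi>$i else 0) - \<pi>$i * \<pi>$j) * x$j)
        = \<pi>$i * x$i - \<pi>$i * (\<Sum>j\<in>UNIV. \<pi>$j * x$j)" for i
      by (simp add: left_diff_distrib sum_subtractf sum_distrib_left mult.assoc if_distrib[where f="\<lambda>t. t * _"] cong: if_cong)
    then show ?thesis by (simp add: M_def matrix_vector_mult_def vec_eq_iff inner_vec_def)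
  qed
  have Q: "x \<bullet> (M *v x) = (\<Sum>j\<in>UNIV. \<pi>$j * (x$j - (\<pi> \<bullet> x))^2)" for x
  proof -
    have "x \<bullet> (M *v x) = (\<Sum>j\<in>UNIV. \<pi>$j * (x$j)^2) - (\<Sum>k\<in>UNIV. \<pi>$k * x$k)^2"
      by (simp add: Mv inner_vec_def algebra_simps sum_subtractf sum_distrib_left
          sum_distrib_right power2_eq_square)
    also have "\<dots> = (\<Sum>j\<in>UNIV. \<pi>$j * (x$j - (\<Sum>k\<in>UNIV. \<pi>$k * x$k))^2)"
      using var_id[of "\<lambda>j. \<pi>$j" "\<lambda>j. x$j"] psum by simp
    finally show ?thesis by (simp add: inner_vec_def mult.commute)
  qed
  have psd: "x \<bullet> (M *v x) \<ge> 0" for x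
    unfolding Q using pos by (intro sum_nonneg) (simp add: less_imp_le)
  have sym: "transpose M = M"
    by (simp add: M_def transpose_def vec_eq_iff mult.commute)
  have Mones: "M *v ones = 0"
    using norm by (simp add: Mv ones_def vec_eq_iff inner_commute)
  have range: "range (\<lambda>x. M *v x) = {y. ones \<bullet> y = 0}"
  proof (intro equalityI subsetI)
    fix y assume "y \<in> range (\<lambda>x. M *v x)"
    then obtain x where y: "y = M *v x" by auto
    have "ones \<bullet> y = (\<Sum>i\<in>UNIV. \<pi>$i * x$i) - (\<Sum>i\<in>UNIV. \<pi>$i) * (\<pi> \<bullet> x)"
      by (simp add: y Mv ones_def inner_vec_def sum_subtractf sum_distrib_right)
    also have "\<dots> = 0" using psum by (simp add: inner_vec_def mult.commute)
    finally show "y \<in> {y. ones \<bullet> y = 0}" by simp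
  next
    fix y :: "real^'n" assume "y \<in> {y. ones \<bullet> y = 0}"
    then have y0: "(\<Sum>i\<in>UNIV. y$i) = 0" by (simp add: ones_def inner_vec_def)
    define x :: "real^'n" where "x = (\<chi> i::'n. y$i / \<pi>$i)"
    have px: "\<pi> \<bullet> x = 0"
    proof -
      have "\<pi> \<bullet> x = (\<Sum>i\<in>UNIV. y$i)"
        unfolding inner_vec_def x_def using pos by (intro sum.cong) (auto simp: less_imp_neq[symmetric])
      then show ?thesis using y0 by simp
    qed
    have "M *v x = y"
      unfolding Mv px using pos by (simp add: vec_eq_iff x_def less_imp_neq[symmetric])
    then show "y \<in> range (\<lambda>x. M *v x)" by (metis rangeI)
  qed
  have onesnz: "ones \<noteq> (0::real^'n)" by (simp add: ones_def vec_eq_iff)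
  have rk: "rank M = CARD('n) - 1"
    unfolding rank_dim_range range using dim_hyperplane[OF onesnz] by simp
  have Mnz: "M \<noteq> 0"
  proof
    assume "M = 0" then have "rank M = 0" by simp
    with rk n2 show False by simp
  qed
  have contr: "(A *v x) \<bullet> (M *v (A *v x)) \<le> x \<bullet> (M *v x)" if A: "A \<in> \<B>" for A x
  proof -
    have st: "stochastic A" using stoch A by blast
    have pA: "\<pi> v* A = \<pi>" using inv A by blast
    have colsum: "(\<Sum>i\<in>UNIV. \<pi>$i * A$i$j) = \<pi>$j" for j
      using pA by (simp add: vector_matrix_mult_def vec_eq_iff mult.commute)
    have pAx: "\<pi> \<bullet> (A *v x) = \<pi> \<bullet> x"
      by (metis pA dot_lmul_matrix)
    have gen: "z \<bullet> (M *v z) = (\<Sum>j\<in>UNIV. \<pi>$j * (z$j)^2) - (\<pi> \<bullet> z)^2" for z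
    proof -
      have "z \<bullet> (M *v z) = (\<Sum>j\<in>UNIV. \<pi>$j * (z$j)^2) - (\<Sum>k\<in>UNIV. \<pi>$k * z$k)^2"
        unfolding Q using var_id[of "\<lambda>j. \<pi>$j" "\<lambda>j. z$j"] psum
        by (simp add: inner_vec_def mult.commute)
      then show ?thesis by (simp add: inner_vec_def)
    qed
    have row: "((A *v x)$i)^2 \<le> (\<Sum>j\<in>UNIV. A$i$j * (x$j)^2)" for i
    proof -
      have rs: "(\<Sum>j\<in>UNIV. A$i$j) = 1" using st by (simp add: stochastic_def)
      have "0 \<le> (\<Sum>j\<in>UNIV. A$i$j * (x$j - (\<Sum>k\<in>UNIV. A$i$k * x$k))^2)"
        using st by (intro sum_nonneg) (simp add: stochastic_def)
      also have "\<dots> = (\<Sum>j\<in>UNIV. A$i$j * (x$j)^2) - (\<Sum>k\<in>UNIV. A$i$k * x$k)^2"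
        using var_id[of "\<lambda>j. A$i$j" "\<lambda>j. x$j"] rs by simp
      finally show ?thesis by (simp add: matrix_vector_mult_def)
    qed
    have "(\<Sum>i\<in>UNIV. \<pi>$i * ((A *v x)$i)^2) \<le> (\<Sum>i\<in>UNIV. \<pi>$i * (\<Sum>j\<in>UNIV. A$i$j * (x$j)^2))"
      using pos row by (intro sum_mono mult_left_mono) (auto simp: less_imp_le)
    also have "\<dots> = (\<Sum>j\<in>UNIV. (\<Sum>i\<in>UNIV. \<pi>$i * A$i$j) * (x$j)^2)"
      by (simp add: sum_distrib_left sum_distrib_right mult.assoc) (rule sum.swap)
    also have "\<dots> = (\<Sum>j\<in>UNIV. \<pi>$j * (x$j)^2)" by (simp add: colsum)
    finally show ?thesis unfolding gen pAx by simp
  qed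
  show ?thesis
    using Mnz sym psd rk Mones contr by blast
qed

end
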